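(* Let $n\ge 2$, $\lambda>0$, let $M$ be one of the listed symmetric spaces with associated function $\mathcal D_M$, and let $0<r<r_{max}(M)$. Let $h_r$ be the (unique) solution on $[0,r)$, real-analytic as a function of $u^2$, of $$h_r''(u)\,(h_r'(u))^{n-1}=e^{\lambda h_r(u)}\mathcal D_M(u),\quad u\in[0,r),\qquad \lim_{u\to r}h_r(u)=\infty.$$ Then: (1) $h_r'(u)>0$ and $h_r''(u)>0$ for all $u\in(0,r)$, and $\inf_{[0,r)}h_r=h_r(0)$; (2) $h_r'(0)=0$; (3) $h_r'(t)=\big(\int_0^t n e^{\lambda h_r(u)}\mathcal D_M(u)\,du\big)^{1/n}$ for all $t\in(0,r)$; (4) $\lim_{u\to r}h_r'(u)=\infty$ and $\lim_{u\to r}h_r''(u)=\infty$.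
   Context: For a real-analytic Riemannian manifold $M$ of real dimension $n$, the Grauert tube $T^rM=\{(x,v)\in TM:|v|<r/2\}$ carries the adapted complex structure (defined for $r<r_{max}(M)$), $\rho(x,v)=4|v|^2$ and $u=\sqrt\rho$. The functions are: $\mathcal D(u)=u^{n-1}$ for $M=\mathbb R^n$ ($r_{max}=\infty$); $\mathcal D(u)=(\sin u)^{n-1}$ for real hyperbolic space $H^n$ ($r_{max}=\pi$); $\mathcal D(u)=(\sinh u)^{n-1}$ for the round sphere and real projective space; $\mathcal D(u)=2^{n-1}(\cosh\frac u2)^k(\sinh\frac u2)^{n-1}$ with $k=1,3,7$ for the complex projective space, quaternionic projective space, and Cayley plane respectively ($r_{max}=\infty$ for compact rank-one spaces). In all cases $\mathcal D_M\ge0$ with $\mathcal D_M(u)=0$ iff $u=0$, $\mathcal D_M^{1/(n-1)}(0)=0$ and $(\mathcal D_M^{1/(n-1)})'(0)=1$. The function $h_r(u)$ (as a function on $T^rM$ through $u=\sqrt\rho$) is a Kähler potential for the complete Kähler–Einstein metric of Ricci curvature $-\lambda$ on $T^rM$. *)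

theory Defs
  imports "HOL-Analysis.Analysis"
begin

datatype symspace = Euclidean | RealHyperbolic | RoundSphere | RealProjective
  | ComplexProjective | QuaternionicProjective | CayleyPlane

fun valid_dim :: "symspace \<Rightarrow> nat \<Rightarrow> bool" where
  "valid_dim ComplexProjective n = even n"
| "valid_dim QuaternionicProjective n = (4 dvd n)"
| "valid_dim CayleyPlane n = (n = 16)"
| "valid_dim _ n = True"

fun D_M :: "symspace \<Rightarrow> nat \<Rightarrow> real \<Rightarrow> real" where
  "D_M Euclidean n u = u ^ (n - 1)"
| "D_M RealHyperbolic n u = (sin u) ^ (n - 1)"
| "D_M RoundSphere n u = (sinh u) ^ (n - 1)"
| "D_M RealProjective n u = (sinh u) ^ (n - 1)"
| "D_M ComplexProjective n u = 2 ^ (n - 1) * (cosh (u/2)) ^ 1 * (sinh (u/2)) ^ (n - 1)"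
| "D_M QuaternionicProjective n u = 2 ^ (n - 1) * (cosh (u/2)) ^ 3 * (sinh (u/2)) ^ (n - 1)"
| "D_M CayleyPlane n u = 2 ^ (n - 1) * (cosh (u/2)) ^ 7 * (sinh (u/2)) ^ (n - 1)"

fun r_max :: "symspace \<Rightarrow> ereal" where
  "r_max RealHyperbolic = ereal pi"
| "r_max _ = \<infinity>"

definition real_analytic_on :: "(real \<Rightarrow> real) \<Rightarrow> real set \<Rightarrow> bool" where
  "real_analytic_on g S \<longleftrightarrow>
     (\<forall>x\<in>S. \<exists>e>0. \<exists>c::nat \<Rightarrow> real. \<forall>y. \<bar>y - x\<bar> < e \<longrightarrow> (\<lambda>k. c k * (y - x) ^ k) sums g y)"

end

theory Submission
  imports Defs
begin

lemma D_pos: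
  assumes "0 < u" "ereal u < r_max M"
  shows "D_M M n u > 0"
proof (cases M)
  case RealHyperbolic
  then have "u < pi" using assms by simp
  then show ?thesis using RealHyperbolic assms by (simp add: sin_gt_zero)
qed (use assms in \<open>auto simp: sinh_real_pos_iff cosh_real_pos\<close>)

lemma D_cont: "continuous_on UNIV (D_M M n)"
  by (cases M) (auto intro!: continuous_intros)

lemma mvt_helper:
  fixes f f' :: "real \<Rightarrow> real"
  assumes d: "\<forall>u\<in>{0..<r}. (f has_real_derivative f' u) (at u within {0..<r})"
    and ab: "0 \<le> a" "a < b" "b < r"
  shows "\<exists>z. a < z \<and> z < b \<and> f b - f a = (b - a) * f' z"
proof -
  have c: "continuous_on {a..b} f"
  proof (rule continuous_on_subset)
    show "continuous_on {0..<r} f"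
      using d by (meson DERIV_continuous continuous_on_eq_continuous_within)
  qed (use ab in auto)
  have da: "(f has_real_derivative f' x) (at x)" if "a < x" "x < b" for x
  proof -
    have "x \<in> interior {0..<r}" using that ab by (simp add: interior_atLeastLessThan)
    moreover have "(f has_real_derivative f' x) (at x within {0..<r})" using d that ab by auto
    ultimately show ?thesis using at_within_interior[of x "{0..<r}"] by simp
  qed
  obtain l z where z: "a < z" "z < b" "(f has_real_derivative l) (at z)" "f b - f a = (b - a) * l"
    using MVT[OF ab(2) c] da real_differentiable_def by blast
  have "l = f' z" using DERIV_unique[OF z(3) da[OF z(1,2)]] .
  then show ?thesis using z by blast
qed

theorem proposition2p1:
  fixes M :: symspace and n :: nat and lam r :: real
    and h h' h'' :: "real \<Rightarrow> real"
  assumes n: "n \<ge> 2" and dim: "valid_dim M n"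
    and lam: "lam > 0"
    and r: "0 < r" "ereal r < r_max M"
    and d1: "\<forall>u\<in>{0..<r}. (h has_real_derivative h' u) (at u within {0..<r})"
    and d2: "\<forall>u\<in>{0..<r}. (h' has_real_derivative h'' u) (at u within {0..<r})"
    and ode: "\<forall>u\<in>{0..<r}. h'' u * (h' u) ^ (n - 1) = exp (lam * h u) * D_M M n u"
    and blowup: "filterlim h at_top (at_left r)"
    and analytic: "\<exists>g. real_analytic_on g {0..<r\<^sup>2} \<and> (\<forall>u\<in>{0..<r}. h u = g (u\<^sup>2))"
  shows "(\<forall>u\<in>{0<..<r}. h' u > 0 \<and> h'' u > 0) \<and> (INF u\<in>{0..<r}. h u) = h 0
       \<and> h' 0 = 0
       \<and> (\<forall>t\<in>{0<..<r}. h' t = (integral {0..t} (\<lambda>u. real n * exp (lam * h u) * D_M M n u)) powr (1 / real n))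
       \<and> filterlim h' at_top (at_left r) \<and> filterlim h'' at_top (at_left r)"
proof -
  let ?D = "D_M M n"
  let ?F = "\<lambda>u. exp (lam * h u)"
  have Dpos: "?D u > 0" if "0 < u" "u \<le> r" for u
  proof -
    have "ereal u < r_max M" using that r(2) by (meson ereal_less_eq(3) le_less_trans)
    then show ?thesis using D_pos that by blast
  qed
  have h'cont: "continuous_on {0..<r} h'"
    using d2 by (meson DERIV_continuous continuous_on_eq_continuous_within)
  have h'0: "h' 0 = 0"
  proof -
    obtain g where g: "real_analytic_on g {0..<r\<^sup>2}" "\<forall>u\<in>{0..<r}. h u = g (u\<^sup>2)"
      using analytic by blast
    have "(0::real) \<in> {0..<r\<^sup>2}" using r by simp
    then obtain e c where e: "e > 0" "\<forall>y. \<bar>y - 0\<bar> < e \<longrightarrow> (\<lambda>k. c k * (y - 0) ^ k) sums g y"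
      using g(1) unfolding real_analytic_on_def by blast
    define S where "S y = (\<Sum>k. c k * y ^ k)" for y :: real
    have sm: "summable (\<lambda>k. c k * (e/2) ^ k)"
    proof -
      have "\<bar>e/2\<bar> < e" using e by simp
      then have "(\<lambda>k. c k * (e/2) ^ k) sums g (e/2)" using e by auto
      then show ?thesis by (rule sums_summable)
    qed
    have dS: "(S has_real_derivative (\<Sum>k. diffs c k * 0 ^ k)) (at ((\<lambda>u::real. u\<^sup>2) 0))"
      unfolding S_def using termdiffs_strong[OF sm, of 0] e by simp
    have dq: "((\<lambda>u::real. u\<^sup>2) has_real_derivative 0) (at 0 within {0..<r})"
      by (auto intro!: derivative_eq_intros)
    have dSq: "((\<lambda>u. S (u\<^sup>2)) has_real_derivative 0) (at 0 within {0..<r})"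
      using DERIV_chain2[OF dS dq] by simp
    have dh: "(h has_real_derivative 0) (at 0 within {0..<r})"
    proof (rule has_field_derivative_transform_within[OF dSq, of "sqrt e"])
      show "0 < sqrt e" using e by simp
      show "0 \<in> {0..<r}" using r by simp
      fix x assume x: "x \<in> {0..<r}" "dist x 0 < sqrt e"
      have "\<bar>x\<bar> < sqrt e" using x by simp
      then have "\<bar>x\<bar>\<^sup>2 < (sqrt e)\<^sup>2" by (intro power_strict_mono) auto
      then have "x\<^sup>2 < e" using e by simp
      then have "(\<lambda>k. c k * (x\<^sup>2) ^ k) sums g (x\<^sup>2)" using e by auto
      then have "S (x\<^sup>2) = g (x\<^sup>2)" unfolding S_def using sums_unique by metis
      then show "S (x\<^sup>2) = h x" using g(2) x by simp
    qed
    have nb: "at (0::real) within {0..<r} \<noteq> bot"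
    proof -
      have "{0..<r} - {0::real} = {0<..<r}" by auto
      then show ?thesis using r by (simp add: at_within_eq_bot_iff closure_greaterThanLessThan)
    qed
    have "(h has_real_derivative h' 0) (at 0 within {0..<r})" using d1 r by simp
    then show ?thesis using dh nb tendsto_unique unfolding has_field_derivative_iff by blast
  qed

  have noBound: False if "0 \<le> c" "c < r" "\<forall>u\<in>{c..<r}. h u \<le> C" for c C
  proof -
    have "\<forall>\<^sub>F x in at_left r. C + 1 \<le> h x" using blowup filterlim_at_top by blast
    moreover have "\<forall>\<^sub>F x in at_left r. x \<in> {c<..<r}" using eventually_at_left_real that by blast
    ultimately have "\<forall>\<^sub>F x in at_left r. C + 1 \<le> h x \<and> x \<in> {c<..<r}" by (rule eventually_conj)
    then obtain x where x: "C + 1 \<le> h x" "x \<in> {c<..<r}"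
      using eventually_happens'[OF trivial_limit_at_left_real] by blast
    then have "x \<in> {c..<r}" by auto
    then have "h x \<le> C" using that(3) by blast
    then show False using x by linarith
  qed
  have dG: "\<forall>u\<in>{0..<r}. ((\<lambda>u. h' u ^ n) has_real_derivative real n * ?F u * ?D u) (at u within {0..<r})"
  proof
    fix u assume u: "u \<in> {0..<r}"
    have "((\<lambda>u. h' u ^ n) has_real_derivative real n * h' u ^ (n - 1) * h'' u) (at u within {0..<r})"
      using d2 u by (auto intro!: derivative_eq_intros)
    moreover have "real n * h' u ^ (n - 1) * h'' u = real n * ?F u * ?D u"
      using ode u by (metis mult.assoc mult.commute)
    ultimately show "((\<lambda>u. h' u ^ n) has_real_derivative real n * ?F u * ?D u) (at u within {0..<r})"
      by (metis (no_types, lifting))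
  qed
  have h'nz: "h' u \<noteq> 0" if u: "u \<in> {0<..<r}" for u
  proof -
    obtain z where z: "0 < z" "z < u" "h' u ^ n - h' 0 ^ n = (u - 0) * (real n * ?F z * ?D z)"
      using mvt_helper[OF dG, of 0 u] u by auto
    have "?D z > 0" using Dpos z u by auto
    then have "(u - 0) * (real n * ?F z * ?D z) > 0" using z n by simp
    moreover have "h' u ^ n - h' 0 ^ n = h' u ^ n" using h'0 n by (simp add: power_0_left)
    ultimately have "h' u ^ n > 0" using z(3) by linarith
    then show ?thesis using n by (auto simp: power_0_left)
  qed
  have h'pos: "h' u > 0" if u: "u \<in> {0<..<r}" for u
  proof (rule ccontr)
    assume "\<not> h' u > 0"
    then have a: "h' u < 0" using h'nz[OF u] by linarith
    have neg: "h' b < 0" if b: "b \<in> {u..<r}" for b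
    proof (rule ccontr)
      assume "\<not> h' b < 0"
      then have "h' u \<le> 0" "0 \<le> h' b" using a by auto
      moreover have "continuous_on {u..b} h'" using h'cont by (rule continuous_on_subset) (use u b in auto)
      ultimately obtain x where "u \<le> x" "x \<le> b" "h' x = 0" using IVT'[of h' u 0 b] b by auto
      then show False using h'nz[of x] u b by auto
    qed
    have "\<forall>b\<in>{u..<r}. h b \<le> h u"
    proof
      fix b assume b: "b \<in> {u..<r}"
      show "h b \<le> h u"
      proof (cases "b = u")
        case False
        then obtain z where z: "u < z" "z < b" "h b - h u = (b - u) * h' z"
          using mvt_helper[OF d1, of u b] u b by auto
        have "h' z < 0" using neg z b by auto
        then have "(b - u) * h' z \<le> 0" using z by (simp add: mult_nonneg_nonpos)
        then show ?thesis using z by simp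
      qed simp
    qed
    then show False using noBound[of u "h u"] u by auto
  qed
  have h''pos: "h'' u > 0" if u: "u \<in> {0<..<r}" for u
  proof -
    have "h'' u * h' u ^ (n - 1) > 0" using ode u Dpos[of u] by simp
    moreover have "h' u ^ (n - 1) > 0" using h'pos[OF u] by simp
    ultimately show ?thesis by (metis zero_less_mult_pos2)
  qed
  have h'nn: "h' u \<ge> 0" if "u \<in> {0..<r}" for u
    using h'pos[of u] h'0 that by (cases "u = 0") auto
  have hmono: "h 0 \<le> h u" if u: "u \<in> {0..<r}" for u
  proof (cases "u = 0")
    case False
    then obtain z where z: "0 < z" "z < u" "h u - h 0 = (u - 0) * h' z"
      using mvt_helper[OF d1, of 0 u] u by auto
    then have "(u - 0) * h' z \<ge> 0" using h'pos[of z] u by simp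
    then show ?thesis using z by simp
  qed simp
  have inf: "(INF u\<in>{0..<r}. h u) = h 0"
    by (rule cInf_eq_minimum) (use r hmono in auto)

  have intf: "h' t = (integral {0..t} (\<lambda>u. real n * ?F u * ?D u)) powr (1 / real n)"
    if t: "t \<in> {0<..<r}" for t
  proof -
    have "((\<lambda>u. real n * ?F u * ?D u) has_integral (h' t ^ n - h' 0 ^ n)) {0..t}"
    proof (rule fundamental_theorem_of_calculus)
      show "0 \<le> t" using t by simp
      fix x assume x: "x \<in> {0..t}"
      have "((\<lambda>u. h' u ^ n) has_real_derivative real n * ?F x * ?D x) (at x within {0..<r})"
        using dG x t by auto
      then have "((\<lambda>u. h' u ^ n) has_real_derivative real n * ?F x * ?D x) (at x within {0..t})"
        by (rule DERIV_subset) (use t in auto)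
      then show "((\<lambda>u. h' u ^ n) has_vector_derivative real n * ?F x * ?D x) (at x within {0..t})"
        using has_real_derivative_iff_has_vector_derivative by blast
    qed
    then have "integral {0..t} (\<lambda>u. real n * ?F u * ?D u) = h' t ^ n"
      using h'0 n by (simp add: integral_unique power_0_left)
    moreover have "(h' t ^ n) powr (1 / real n) = h' t"
    proof -
      have p: "h' t > 0" using h'pos t by simp
      then have "h' t ^ n = h' t powr real n" by (simp add: powr_realpow)
      then have "(h' t ^ n) powr (1 / real n) = h' t powr (real n * (1 / real n))"
        by (simp add: powr_powr)
      also have "\<dots> = h' t" using n p by simp
      finally show ?thesis .
    qed
    ultimately show ?thesis by simp
  qed
  have h'mono: "h' a \<le> h' b" if ab: "0 \<le> a" "a \<le> b" "b < r" for a b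
  proof (cases "a = b")
    case False
    then obtain z where z: "a < z" "z < b" "h' b - h' a = (b - a) * h'' z"
      using mvt_helper[OF d2, of a b] ab by auto
    then have "(b - a) * h'' z \<ge> 0" using h''pos[of z] ab by simp
    then show ?thesis using z by simp
  qed simp
  have lim1: "filterlim h' at_top (at_left r)"
    unfolding filterlim_at_top
  proof
    fix Z :: real
    define B where "B = max Z 0"
    have "\<exists>a\<in>{0<..<r}. h' a > B"
    proof (rule ccontr)
      assume "\<not> ?thesis"
      then have hb: "\<forall>a\<in>{0<..<r}. h' a \<le> B" by auto
      have "\<forall>u\<in>{0..<r}. h u \<le> h 0 + B * r"
      proof
        fix u assume u: "u \<in> {0..<r}"
        show "h u \<le> h 0 + B * r"
        proof (cases "u = 0")
          case True then show ?thesis using r by (simp add: B_def)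
        next
          case False
          then obtain z where z: "0 < z" "z < u" "h u - h 0 = (u - 0) * h' z"
            using mvt_helper[OF d1, of 0 u] u by auto
          have "h' z \<le> B" using hb z u by auto
          then have "u * h' z \<le> u * B" using u by (simp add: mult_left_mono)
          also have "\<dots> \<le> r * B" using u by (simp add: B_def mult_right_mono)
          finally show ?thesis using z by (simp add: mult.commute)
        qed
      qed
      then show False using noBound[of 0] r by auto
    qed
    then obtain a where a: "a \<in> {0<..<r}" "h' a > B" by blast
    have "\<forall>\<^sub>F x in at_left r. x \<in> {a<..<r}" using eventually_at_left_real a by simp
    then show "\<forall>\<^sub>F x in at_left r. Z \<le> h' x"
    proof (rule eventually_mono)
      fix x assume "x \<in> {a<..<r}"
      then have "h' a \<le> h' x" using h'mono[of a x] a by auto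
      then show "Z \<le> h' x" using a by (simp add: B_def)
    qed
  qed

  obtain K where K: "K > 0" "\<forall>u\<in>{0..r}. ?D u \<le> K"
  proof -
    have "compact (?D ` {0..r})"
      by (rule compact_continuous_image) (use D_cont continuous_on_subset in blast, simp)
    then have "bounded (?D ` {0..r})" by (rule compact_imp_bounded)
    then obtain b where "b > 0" "\<forall>x\<in>?D ` {0..r}. norm x \<le> b" using bounded_pos by blast
    then show ?thesis using that[of b] by force
  qed
  define c1 where "c1 = (real n + 1) * K / lam"
  have c1: "c1 > 0" using K lam by (simp add: c1_def)
  have bound: "h' u ^ (n + 1) \<le> c1 * ?F u" if u: "u \<in> {0..<r}" for u
  proof -
    define \<phi> where "\<phi> v = c1 * ?F v - h' v ^ (n + 1)" for v
    define \<phi>' where "\<phi>' v = c1 * (?F v * (lam * h' v)) - real (n + 1) * h' v ^ n * h'' v" for v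
    have d\<phi>: "\<forall>v\<in>{0..<r}. (\<phi> has_real_derivative \<phi>' v) (at v within {0..<r})"
    proof
      fix v assume v: "v \<in> {0..<r}"
      have pw: "h' v ^ n = h' v * h' v ^ (n - Suc 0)" using n by (cases n) auto
      show "(\<phi> has_real_derivative \<phi>' v) (at v within {0..<r})"
        unfolding \<phi>_def \<phi>'_def using d1 d2 v pw
        by (auto intro!: derivative_eq_intros simp: algebra_simps)
    qed
    have \<phi>'nn: "\<phi>' v \<ge> 0" if v: "v \<in> {0<..<r}" for v
    proof -
      have hn: "h' v ^ n * h'' v = h' v * (?F v * ?D v)"
      proof -
        have "h' v ^ n = h' v * h' v ^ (n - 1)" using n by (cases n) auto
        then show ?thesis using ode v by (simp add: algebra_simps)
      qed
      have c1l: "c1 * lam = real (n + 1) * K" using lam by (simp add: c1_def)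
      have "\<phi>' v = (c1 * lam) * (h' v * ?F v) - real (n + 1) * (h' v ^ n * h'' v)"
        unfolding \<phi>'_def by (simp add: algebra_simps)
      also have "\<dots> = (real (n + 1) * K) * (h' v * ?F v) - real (n + 1) * (h' v * (?F v * ?D v))"
        using hn c1l by simp
      also have "\<dots> = h' v * ?F v * (real (n + 1) * (K - ?D v))"
        by (simp add: algebra_simps)
      finally have "\<phi>' v = h' v * ?F v * (real (n + 1) * (K - ?D v))" .
      moreover have "?D v \<le> K" using K v by auto
      ultimately show ?thesis using h'pos[OF v] by simp
    qed
    have "\<phi> 0 \<le> \<phi> u"
    proof (cases "u = 0")
      case False
      then obtain z where z: "0 < z" "z < u" "\<phi> u - \<phi> 0 = (u - 0) * \<phi>' z"
        using mvt_helper[OF d\<phi>, of 0 u] u by auto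
      then have "(u - 0) * \<phi>' z \<ge> 0" using \<phi>'nn[of z] u by simp
      then show ?thesis using z by simp
    qed simp
    moreover have "\<phi> 0 \<ge> 0" unfolding \<phi>_def using h'0 c1 by simp
    ultimately show ?thesis unfolding \<phi>_def by simp
  qed
  define d where "d = ?D r / 2"
  have d: "d > 0" using Dpos[of r] r by (simp add: d_def)
  have evD: "\<forall>\<^sub>F x in at_left r. d < ?D x"
  proof -
    have "isCont ?D r" using D_cont by (simp add: continuous_on_eq_continuous_at)
    then have "(?D \<longlongrightarrow> ?D r) (at r)" by (simp add: isCont_def)
    then have "(?D \<longlongrightarrow> ?D r) (at_left r)" by (rule tendsto_mono[OF at_le, rotated]) simp
    then show ?thesis using d by (intro order_tendstoD(1)) (auto simp: d_def)
  qed
  have lim2: "filterlim h'' at_top (at_left r)"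
    unfolding filterlim_at_top
  proof
    fix Z :: real
    have e1: "\<forall>\<^sub>F x in at_left r. max 1 (Z * c1 / d) \<le> h' x" using lim1 filterlim_at_top by blast
    have e2: "\<forall>\<^sub>F x in at_left r. x \<in> {0<..<r}" using eventually_at_left_real r by simp
    show "\<forall>\<^sub>F x in at_left r. Z \<le> h'' x"
      using eventually_conj[OF e1 eventually_conj[OF e2 evD]]
    proof (rule eventually_mono)
      fix x assume x: "max 1 (Z * c1 / d) \<le> h' x \<and> x \<in> {0<..<r} \<and> d < ?D x"
      have hp: "h' x > 0" using x by simp
      have "h'' x * h' x ^ (n - 1) = ?F x * ?D x" using ode x by auto
      also have "\<dots> \<ge> ?F x * d" using x by (simp add: less_imp_le)
      finally have A: "h'' x * h' x ^ (n - 1) \<ge> ?F x * d" .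
      have "h' x ^ (n + 1) \<le> c1 * ?F x" using bound x by auto
      moreover have "h' x ^ (n + 1) = h' x ^ 2 * h' x ^ (n - 1)"
        using n by (simp add: power_add[symmetric])
      ultimately have "h' x ^ 2 * h' x ^ (n - 1) * (d / c1) \<le> ?F x * d"
        using c1 d by (simp add: field_simps)
      then have "(d / c1 * h' x ^ 2) * h' x ^ (n - 1) \<le> h'' x * h' x ^ (n - 1)"
        using A by (simp add: algebra_simps)
      moreover have "h' x ^ (n - 1) > 0" using hp by simp
      ultimately have B: "d / c1 * h' x ^ 2 \<le> h'' x" by (rule mult_right_le_imp_le)
      have "h' x \<le> h' x ^ 2" using x by (simp add: power2_eq_square)
      moreover have "d / c1 > 0" using c1 d by simp
      ultimately have "d / c1 * h' x \<le> d / c1 * h' x ^ 2" by (intro mult_left_mono) auto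
      moreover have "Z \<le> d / c1 * h' x"
      proof -
        have "Z * c1 / d \<le> h' x" using x by simp
        then show ?thesis using c1 d by (simp add: field_simps)
      qed
      ultimately show "Z \<le> h'' x" using B by linarith
    qed
  qed
  show ?thesis using h'pos h''pos inf h'0 intf lim1 lim2 by blast

qed

end
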